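(* For any instance of the multiple-processor multitask scheduling problem described in the context, for all $y\ge0$ and $t\ge0$, $$W^{\mathrm{M\text{-}SRPT}}_{\le y}(t)-W^{\mathrm{SRPT}_{1,N}}_{\le y}(t)\le N\cdot(2y+\eta).$$
   Context: Problem: $N$ identical unit-speed machines; jobs arrive online, job $i$ with release date $r_i$ and tasks of processing times $p_i^{(\ell)}>0$, workload $p_i=\sum_\ell p_i^{(\ell)}$; each task is preemptive or non-preemptive (a non-preemptive task once started runs uninterrupted to completion); each machine processes at most one task at a time; a job completes when all its tasks complete. $\eta$ is the maximum processing time of a non-preemptive task. M-SRPT: at every time, each machine running a started non-preemptive task continues it; all other machines are assigned to alive jobs in increasing order of remaining total workload; tasks within a job are processed in an arbitrary order. $\mathrm{SRPT}_{1,N}$: on the same arrival sequence, a single machine of speed $N$ processing each job as a single fully preemptible workload $p_i$ (tasks ignored) by the shortest-remaining-processing-time rule. For a schedule $\pi$, $W^\pi_{\le y}(t)$ is the total remaining workload at time $t$ of the alive jobs whose remaining workload is at most $y$. *)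

theory Defs
  imports "HOL-Analysis.Analysis"
begin

text \<open>Instance: N machines; jobs 0..<n; job i has release date r i and tasks 0..<k i;
  task (i,l) has processing time p i l and is non-preemptive iff np i l.\<close>

definition pconst :: "(real \<Rightarrow> 'a) \<Rightarrow> bool" where
  "pconst f \<longleftrightarrow>
     (\<forall>t. \<exists>e>0. \<forall>s. t \<le> s \<and> s < t + e \<longrightarrow> f s = f t) \<and>
     (\<forall>t. \<exists>e>0. \<forall>s. t - e < s \<and> s < t \<longrightarrow> f s = f (t - e / 2))"

text \<open>Multi-machine schedule: sigma t m = Some (i,l) means machine m processes task l of job i
  at time t (on [t, t+dt)); None means idle.\<close>
definition mproc :: "nat \<Rightarrow> (real \<Rightarrow> nat \<Rightarrow> (nat \<times> nat) option) \<Rightarrow> nat \<Rightarrow> nat \<Rightarrow> real \<Rightarrow> real" where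
  "mproc N \<sigma> i l t = (\<Sum>m<N. measure lborel {s \<in> {0..<t}. \<sigma> s m = Some (i, l)})"

definition mrem :: "nat \<Rightarrow> (nat \<Rightarrow> nat \<Rightarrow> real) \<Rightarrow> (real \<Rightarrow> nat \<Rightarrow> (nat \<times> nat) option)
    \<Rightarrow> nat \<Rightarrow> nat \<Rightarrow> real \<Rightarrow> real" where
  "mrem N p \<sigma> i l t = p i l - mproc N \<sigma> i l t"

definition mjrem :: "nat \<Rightarrow> (nat \<Rightarrow> nat) \<Rightarrow> (nat \<Rightarrow> nat \<Rightarrow> real) \<Rightarrow> (real \<Rightarrow> nat \<Rightarrow> (nat \<times> nat) option)
    \<Rightarrow> nat \<Rightarrow> real \<Rightarrow> real" where
  "mjrem N k p \<sigma> i t = (\<Sum>l<k i. mrem N p \<sigma> i l t)"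

definition msrpt_schedule :: "nat \<Rightarrow> nat \<Rightarrow> (nat \<Rightarrow> real) \<Rightarrow> (nat \<Rightarrow> nat) \<Rightarrow> (nat \<Rightarrow> nat \<Rightarrow> real)
    \<Rightarrow> (nat \<Rightarrow> nat \<Rightarrow> bool) \<Rightarrow> (real \<Rightarrow> nat \<Rightarrow> (nat \<times> nat) option) \<Rightarrow> bool" where
  "msrpt_schedule N n r k p np \<sigma> \<longleftrightarrow>
     pconst \<sigma> \<and>
     \<comment> \<open>only released, unfinished, existing tasks are processed\<close>
     (\<forall>t\<ge>0. \<forall>m<N. \<forall>i l. \<sigma> t m = Some (i, l) \<longrightarrow>
         i < n \<and> l < k i \<and> r i \<le> t \<and> mrem N p \<sigma> i l t > 0) \<and>
     \<comment> \<open>a task is processed by at most one machine at a time\<close>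
     (\<forall>t\<ge>0. \<forall>m<N. \<forall>m'<N. m \<noteq> m' \<and> \<sigma> t m \<noteq> None \<longrightarrow> \<sigma> t m' \<noteq> \<sigma> t m) \<and>
     \<comment> \<open>a started non-preemptive task continues on its machine until completion\<close>
     (\<forall>s t m i l. 0 \<le> s \<and> s \<le> t \<and> m < N \<and> np i l \<and> \<sigma> s m = Some (i, l)
         \<and> mrem N p \<sigma> i l t > 0 \<longrightarrow> \<sigma> t m = Some (i, l)) \<and>
     \<comment> \<open>priority rule: if an alive job j has an unfinished task that is not running and may be
        started/resumed, then every machine is busy, either with a started non-preemptive task
        or with a task of a job whose remaining workload is at most that of j\<close>
     (\<forall>t\<ge>0. \<forall>j<n. \<forall>l<k j.
         r j \<le> t \<and> mrem N p \<sigma> j l t > 0 \<and> (\<forall>m<N. \<sigma> t m \<noteq> Some (j, l))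
         \<and> (\<not> np j l \<or> mproc N \<sigma> j l t = 0) \<longrightarrow>
         (\<forall>m<N. \<exists>i' l'. \<sigma> t m = Some (i', l') \<and>
             ((np i' l' \<and> mproc N \<sigma> i' l' t > 0) \<or> mjrem N k p \<sigma> i' t \<le> mjrem N k p \<sigma> j t)))"

text \<open>Single machine of speed N: tau t = Some i means job i is processed at time t.\<close>
definition sproc :: "nat \<Rightarrow> (real \<Rightarrow> nat option) \<Rightarrow> nat \<Rightarrow> real \<Rightarrow> real" where
  "sproc N \<tau> i t = real N * measure lborel {s \<in> {0..<t}. \<tau> s = Some i}"

definition srem :: "nat \<Rightarrow> (nat \<Rightarrow> nat) \<Rightarrow> (nat \<Rightarrow> nat \<Rightarrow> real) \<Rightarrow> (real \<Rightarrow> nat option)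
    \<Rightarrow> nat \<Rightarrow> real \<Rightarrow> real" where
  "srem N k p \<tau> i t = (\<Sum>l<k i. p i l) - sproc N \<tau> i t"

definition srpt1N_schedule :: "nat \<Rightarrow> nat \<Rightarrow> (nat \<Rightarrow> real) \<Rightarrow> (nat \<Rightarrow> nat) \<Rightarrow> (nat \<Rightarrow> nat \<Rightarrow> real)
    \<Rightarrow> (real \<Rightarrow> nat option) \<Rightarrow> bool" where
  "srpt1N_schedule N n r k p \<tau> \<longleftrightarrow>
     pconst \<tau> \<and>
     (\<forall>t\<ge>0. \<forall>i. \<tau> t = Some i \<longrightarrow> i < n \<and> r i \<le> t \<and> srem N k p \<tau> i t > 0) \<and>
     (\<forall>t\<ge>0. \<forall>j<n. r j \<le> t \<and> srem N k p \<tau> j t > 0 \<longrightarrow>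
         (\<exists>i. \<tau> t = Some i \<and> srem N k p \<tau> i t \<le> srem N k p \<tau> j t))"

definition Wle :: "nat \<Rightarrow> (nat \<Rightarrow> real) \<Rightarrow> (nat \<Rightarrow> real \<Rightarrow> real) \<Rightarrow> real \<Rightarrow> real \<Rightarrow> real" where
  "Wle n r R y t = (\<Sum>i\<in>{i. i < n \<and> r i \<le> t \<and> 0 < R i t \<and> R i t \<le> y}. R i t)"

definition eta :: "nat \<Rightarrow> (nat \<Rightarrow> nat) \<Rightarrow> (nat \<Rightarrow> nat \<Rightarrow> real) \<Rightarrow> (nat \<Rightarrow> nat \<Rightarrow> bool) \<Rightarrow> real" where
  "eta n k p np = Max ({0} \<union> {p i l | i l. i < n \<and> l < k i \<and> np i l})"

end

theory Submission
  imports Defs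
begin


lemma real_ind0:
  fixes P :: "real \<Rightarrow> bool"
  assumes A: "\<And>s. 0 \<le> s \<Longrightarrow> (\<And>u. 0 \<le> u \<Longrightarrow> u < s \<Longrightarrow> P u) \<Longrightarrow> P s"
      and B: "\<And>s. 0 \<le> s \<Longrightarrow> (\<And>u. 0 \<le> u \<Longrightarrow> u \<le> s \<Longrightarrow> P u) \<Longrightarrow> eventually P (at_right s)"
      and t: "0 \<le> t"
  shows "P t"
proof (rule ccontr)
  assume nP: "\<not> P t"
  define C where "C = {s. 0 \<le> s \<and> \<not> P s}"
  have ne: "C \<noteq> {}" using nP t by (auto simp: C_def)
  have bdd: "bdd_below C" unfolding bdd_below_def C_def by auto
  define b where "b = Inf C"
  have b0: "0 \<le> b" unfolding b_def using ne by (intro cInf_greatest) (auto simp: C_def)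
  have below: "P u" if "0 \<le> u" "u < b" for u
  proof (rule ccontr)
    assume "\<not> P u" then have "u \<in> C" using that by (auto simp: C_def)
    then have "b \<le> u" unfolding b_def using bdd by (rule cInf_lower)
    then show False using that by simp
  qed
  have Pb: "P b" using A[OF b0 below] by blast
  have le: "P u" if "0 \<le> u" "u \<le> b" for u
    using below[of u] Pb that by (cases "u < b") auto
  from B[OF b0 le] obtain c where c: "c > b" "\<And>y. y > b \<Longrightarrow> y < c \<Longrightarrow> P y"
    unfolding eventually_at_right_field by blast
  then have "Inf C < c" by (simp add: b_def)
  then obtain x where x: "x \<in> C" "x < c" using cInf_less_iff[OF ne bdd] by blast
  have "b \<le> x" unfolding b_def using x(1) bdd by (rule cInf_lower)
  show False
  proof (cases "x = b")
    case True then show False using Pb x by (auto simp: C_def)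
  next
    case False then have "x > b" using \<open>b \<le> x\<close> by simp
    then show False using c(2)[of x] x by (auto simp: C_def)
  qed
qed

definition seg :: "(real \<Rightarrow> 'a) \<Rightarrow> ('a \<Rightarrow> bool) \<Rightarrow> real \<Rightarrow> real \<Rightarrow> real set" where
  "seg f Q a b = {w \<in> {a..<b}. Q (f w)}"

lemma pconst_right: "pconst f \<Longrightarrow> \<exists>e>0. \<forall>v. s \<le> v \<and> v < s + e \<longrightarrow> f v = f s"
  unfolding pconst_def by blast

lemma pconst_left: "pconst f \<Longrightarrow> \<exists>e>0. \<forall>v. s - e < v \<and> v < s \<longrightarrow> f v = f (s - e / 2)"
  unfolding pconst_def by blast

lemma seg_Un: "a \<le> b \<Longrightarrow> b \<le> c \<Longrightarrow> seg f Q a c = seg f Q a b \<union> seg f Q b c"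
  unfolding seg_def by auto

lemma seg_const: "(\<And>w. a \<le> w \<Longrightarrow> w < b \<Longrightarrow> f w = x) \<Longrightarrow>
   seg f Q a b = (if Q x then {a..<b} else {})"
  unfolding seg_def by auto

lemma seg_sets0:
  assumes pc: "pconst f" shows "seg f Q 0 a \<in> sets lborel"
proof (cases "0 \<le> a")
  case False then have "seg f Q 0 a = {}" by (auto simp: seg_def)
  then show ?thesis by simp
next
  case True
  show ?thesis
  proof (rule real_ind0[where P="\<lambda>a. seg f Q 0 a \<in> sets lborel", OF _ _ True])
    fix s :: real assume s: "0 \<le> s" and IH: "\<And>u. 0 \<le> u \<Longrightarrow> u < s \<Longrightarrow> seg f Q 0 u \<in> sets lborel"
    show "seg f Q 0 s \<in> sets lborel"
    proof (cases "s = 0")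
      case True then show ?thesis by (simp add: seg_def)
    next
      case False
      obtain e where e: "e > 0" "\<And>v. s - e < v \<Longrightarrow> v < s \<Longrightarrow> f v = f (s - e / 2)"
        using pconst_left[OF pc, of s] by blast
      define a' where "a' = max 0 (s - e/2)"
      have a': "0 \<le> a'" "a' < s" "s - e < a'" using s False e(1) by (auto simp: a'_def)
      have "seg f Q 0 s = seg f Q 0 a' \<union> seg f Q a' s" using a' by (intro seg_Un) auto
      also have "seg f Q a' s = (if Q (f (s - e/2)) then {a'..<s} else {})"
        apply (rule seg_const) apply (rule e(2)) using a' by auto
      finally show ?thesis using IH[OF a'(1,2)] by auto
    qed
  next
    fix s :: real assume s: "0 \<le> s" and IH: "\<And>u. 0 \<le> u \<Longrightarrow> u \<le> s \<Longrightarrow> seg f Q 0 u \<in> sets lborel"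
    obtain e where e: "e > 0" "\<And>v. s \<le> v \<Longrightarrow> v < s + e \<Longrightarrow> f v = f s"
      using pconst_right[OF pc, of s] by blast
    have "eventually (\<lambda>v. v \<in> {s<..<s+e}) (at_right s)"
      using e(1) by (intro eventually_at_right_real) simp
    then show "eventually (\<lambda>a. seg f Q 0 a \<in> sets lborel) (at_right s)"
    proof (rule eventually_mono)
      fix v assume v: "v \<in> {s<..<s+e}"
      have "seg f Q 0 v = seg f Q 0 s \<union> seg f Q s v" using v s by (intro seg_Un) auto
      also have "seg f Q s v = (if Q (f s) then {s..<v} else {})"
        apply (rule seg_const) apply (rule e(2)) using v by auto
      finally show "seg f Q 0 v \<in> sets lborel" using IH[OF s] by auto
    qed
  qed
qed

lemma seg_sets:
  assumes pc: "pconst f" and a: "0 \<le> a" shows "seg f Q a b \<in> sets lborel"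
proof (cases "a \<le> b")
  case True
  have "seg f Q a b = seg f Q 0 b - seg f Q 0 a" using a True by (auto simp: seg_def)
  then show ?thesis using seg_sets0[OF pc] by auto
next
  case False then have "seg f Q a b = {}" by (auto simp: seg_def)
  then show ?thesis by simp
qed

lemma seg_fin: "emeasure lborel (seg f Q a b) \<noteq> \<infinity>"
proof (cases "a \<le> b")
  case True
  have "emeasure lborel (seg f Q a b) \<le> emeasure lborel {a..<b}"
    by (rule emeasure_mono) (auto simp: seg_def)
  also have "\<dots> = ennreal (b - a)" using True by simp
  finally have "emeasure lborel (seg f Q a b) < top" using le_less_trans ennreal_less_top by blast
  then show ?thesis by simp
next
  case False then have "seg f Q a b = {}" by (auto simp: seg_def)
  then show ?thesis by simp
qed

lemma seg_split:
  assumes pc: "pconst f" and "0 \<le> a" "a \<le> b"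
  shows "measure lborel (seg f Q 0 b) = measure lborel (seg f Q 0 a) + measure lborel (seg f Q a b)"
proof -
  have "seg f Q 0 b = seg f Q 0 a \<union> seg f Q a b" using assms by (intro seg_Un) auto
  moreover have "seg f Q 0 a \<inter> seg f Q a b = {}" by (auto simp: seg_def)
  moreover have "measure lborel (seg f Q 0 a \<union> seg f Q a b) = measure lborel (seg f Q 0 a) + measure lborel (seg f Q a b)"
    using assms calculation(2) by (rule_tac measure_Union[OF seg_fin seg_fin seg_sets[OF pc] seg_sets[OF pc]]) auto
  ultimately show ?thesis by simp
qed

lemma seg_le: "a \<le> b \<Longrightarrow> measure lborel (seg f Q a b) \<le> b - a"
proof (cases "seg f Q a b \<in> sets lborel")
  case True
  assume ab: "a \<le> b"
  have "measure lborel (seg f Q a b) \<le> measure lborel {a..<b}"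
    using True ab by (intro measure_mono_fmeasurable) (auto simp: seg_def fmeasurable_def)
  then show ?thesis using ab by simp
next
  case False assume "a \<le> b" then show ?thesis using False by (simp add: measure_notin_sets)
qed

lemma seg_ge: "0 \<le> measure lborel (seg f Q a b)"
  by simp

lemma seg_all: "a \<le> b \<Longrightarrow> (\<And>w. a \<le> w \<Longrightarrow> w < b \<Longrightarrow> Q (f w)) \<Longrightarrow> measure lborel (seg f Q a b) = b - a"
proof -
  assume "a \<le> b" "\<And>w. a \<le> w \<Longrightarrow> w < b \<Longrightarrow> Q (f w)"
  then have "seg f Q a b = {a..<b}" by (auto simp: seg_def)
  then show ?thesis using \<open>a \<le> b\<close> by simp
qed

lemma seg_none: "(\<And>w. a \<le> w \<Longrightarrow> w < b \<Longrightarrow> \<not> Q (f w)) \<Longrightarrow> measure lborel (seg f Q a b) = 0"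
proof -
  assume "\<And>w. a \<le> w \<Longrightarrow> w < b \<Longrightarrow> \<not> Q (f w)"
  then have "seg f Q a b = {}" by (auto simp: seg_def)
  then show ?thesis by simp
qed

lemma seg_pos: "measure lborel (seg f Q a b) > 0 \<Longrightarrow> \<exists>w. a \<le> w \<and> w < b \<and> Q (f w)"
  using seg_none[of a b Q f] by force


lemma lim_left:
  fixes X B C a s :: real
  assumes "a < s" "C \<ge> 0" "\<And>u. a < u \<Longrightarrow> u < s \<Longrightarrow> X \<le> B + C * (s - u)"
  shows "X \<le> B"
proof (rule field_le_epsilon)
  fix e :: real assume e: "e > 0"
  define u where "u = max ((a + s) / 2) (s - e / (C + 1))"
  have h: "a < (a + s) / 2" "(a + s) / 2 < s" "0 < e / (C + 1)" using assms e by auto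
  have u: "a < u" "u < s" using h less_le_trans[OF h(1) max.cobounded1] unfolding u_def by auto
  have "s - u \<le> e / (C + 1)" by (auto simp: u_def)
  then have "C * (s - u) \<le> C * (e / (C + 1))" using assms by (intro mult_left_mono) auto
  also have "\<dots> \<le> e" using assms e by (simp add: field_simps)
  finally show "X \<le> B + e" using assms(3)[OF u] by simp
qed

locale sched =
  fixes N n :: nat and r :: "nat \<Rightarrow> real" and k :: "nat \<Rightarrow> nat"
    and p :: "nat \<Rightarrow> nat \<Rightarrow> real" and np :: "nat \<Rightarrow> nat \<Rightarrow> bool"
    and \<sigma> :: "real \<Rightarrow> nat \<Rightarrow> (nat \<times> nat) option" and \<tau> :: "real \<Rightarrow> nat option"
    and y :: real
  assumes N1: "N \<ge> 1"
    and rk: "\<forall>i<n. r i \<ge> 0 \<and> k i \<ge> 1"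
    and ppos: "\<forall>i<n. \<forall>l<k i. p i l > 0"
    and ms: "msrpt_schedule N n r k p np \<sigma>"
    and ss: "srpt1N_schedule N n r k p \<tau>"
    and y0: "y \<ge> 0"
begin

abbreviation "MP \<equiv> mproc N \<sigma>"
abbreviation "MR \<equiv> mrem N p \<sigma>"
abbreviation "MJ \<equiv> mjrem N k p \<sigma>"
abbreviation "SP \<equiv> sproc N \<tau>"
abbreviation "SR \<equiv> srem N k p \<tau>"

definition "PP i = (\<Sum>l<k i. p i l)"
definition "cnt i l t = (\<Sum>m<N. if \<sigma> t m = Some (i, l) then 1 else (0::real))"
definition "running i l t \<longleftrightarrow> (\<exists>m<N. \<sigma> t m = Some (i, l))"

lemma ms_all: "pconst \<sigma> \<and>
     (\<forall>t\<ge>0. \<forall>m<N. \<forall>i l. \<sigma> t m = Some (i, l) \<longrightarrow>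
         i < n \<and> l < k i \<and> r i \<le> t \<and> mrem N p \<sigma> i l t > 0) \<and>
     (\<forall>t\<ge>0. \<forall>m<N. \<forall>m'<N. m \<noteq> m' \<and> \<sigma> t m \<noteq> None \<longrightarrow> \<sigma> t m' \<noteq> \<sigma> t m) \<and>
     (\<forall>s t m i l. 0 \<le> s \<and> s \<le> t \<and> m < N \<and> np i l \<and> \<sigma> s m = Some (i, l)
         \<and> mrem N p \<sigma> i l t > 0 \<longrightarrow> \<sigma> t m = Some (i, l)) \<and>
     (\<forall>t\<ge>0. \<forall>j<n. \<forall>l<k j.
         r j \<le> t \<and> mrem N p \<sigma> j l t > 0 \<and> (\<forall>m<N. \<sigma> t m \<noteq> Some (j, l))
         \<and> (\<not> np j l \<or> mproc N \<sigma> j l t = 0) \<longrightarrow>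
         (\<forall>m<N. \<exists>i' l'. \<sigma> t m = Some (i', l') \<and>
             ((np i' l' \<and> mproc N \<sigma> i' l' t > 0) \<or> mjrem N k p \<sigma> i' t \<le> mjrem N k p \<sigma> j t)))"
  using ms unfolding msrpt_schedule_def .

lemma pc_sigma: "pconst \<sigma>" using ms_all by (elim conjE)
lemma pc_tau: "pconst \<tau>" using ss unfolding srpt1N_schedule_def by (elim conjE)

lemma procd: "0 \<le> t \<Longrightarrow> m < N \<Longrightarrow> \<sigma> t m = Some (i, l) \<Longrightarrow> i < n \<and> l < k i \<and> r i \<le> t \<and> MR i l t > 0"
proof -
  have H: "\<forall>t\<ge>0. \<forall>m<N. \<forall>i l. \<sigma> t m = Some (i, l) \<longrightarrow>
         i < n \<and> l < k i \<and> r i \<le> t \<and> mrem N p \<sigma> i l t > 0" using ms_all by (elim conjE)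
  show "0 \<le> t \<Longrightarrow> m < N \<Longrightarrow> \<sigma> t m = Some (i, l) \<Longrightarrow> i < n \<and> l < k i \<and> r i \<le> t \<and> MR i l t > 0"
    using H[rule_format, of t m i l] by simp
qed

lemma uniq: "0 \<le> t \<Longrightarrow> m < N \<Longrightarrow> m' < N \<Longrightarrow> \<sigma> t m = Some x \<Longrightarrow> \<sigma> t m' = Some x \<Longrightarrow> m = m'"
proof (rule ccontr)
  assume a: "0 \<le> t" "m < N" "m' < N" "\<sigma> t m = Some x" "\<sigma> t m' = Some x" "m \<noteq> m'"
  have H: "\<forall>t\<ge>0. \<forall>m<N. \<forall>m'<N. m \<noteq> m' \<and> \<sigma> t m \<noteq> None \<longrightarrow> \<sigma> t m' \<noteq> \<sigma> t m"
    using ms_all by (elim conjE)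
  show False using H[rule_format, of t m m'] a by simp
qed

lemma contin: "0 \<le> s \<Longrightarrow> s \<le> t \<Longrightarrow> m < N \<Longrightarrow> np i l \<Longrightarrow> \<sigma> s m = Some (i, l) \<Longrightarrow> MR i l t > 0 \<Longrightarrow> \<sigma> t m = Some (i, l)"
proof -
  have H: "\<forall>s t m i l. 0 \<le> s \<and> s \<le> t \<and> m < N \<and> np i l \<and> \<sigma> s m = Some (i, l)
         \<and> mrem N p \<sigma> i l t > 0 \<longrightarrow> \<sigma> t m = Some (i, l)" using ms_all by (elim conjE)
  show "0 \<le> s \<Longrightarrow> s \<le> t \<Longrightarrow> m < N \<Longrightarrow> np i l \<Longrightarrow> \<sigma> s m = Some (i, l) \<Longrightarrow> MR i l t > 0 \<Longrightarrow> \<sigma> t m = Some (i, l)"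
    using H[rule_format, of s t m i l] by simp
qed

lemma prio: "0 \<le> t \<Longrightarrow> j < n \<Longrightarrow> l < k j \<Longrightarrow> r j \<le> t \<Longrightarrow> MR j l t > 0 \<Longrightarrow> \<not> running j l t \<Longrightarrow>
   (\<not> np j l \<or> MP j l t = 0) \<Longrightarrow> m < N \<Longrightarrow>
   \<exists>i' l'. \<sigma> t m = Some (i', l') \<and> ((np i' l' \<and> MP i' l' t > 0) \<or> MJ i' t \<le> MJ j t)"
proof -
  have H: "\<forall>t\<ge>0. \<forall>j<n. \<forall>l<k j.
         r j \<le> t \<and> mrem N p \<sigma> j l t > 0 \<and> (\<forall>m<N. \<sigma> t m \<noteq> Some (j, l))
         \<and> (\<not> np j l \<or> mproc N \<sigma> j l t = 0) \<longrightarrow>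
         (\<forall>m<N. \<exists>i' l'. \<sigma> t m = Some (i', l') \<and>
             ((np i' l' \<and> mproc N \<sigma> i' l' t > 0) \<or> mjrem N k p \<sigma> i' t \<le> mjrem N k p \<sigma> j t))"
    using ms_all by (elim conjE)
  assume a: "0 \<le> t" "j < n" "l < k j" "r j \<le> t" "MR j l t > 0" "\<not> running j l t"
   "\<not> np j l \<or> MP j l t = 0" "m < N"
  have "\<forall>m<N. \<sigma> t m \<noteq> Some (j, l)" using a(6) unfolding running_def by blast
  then show ?thesis using H[rule_format, of t j l m] a by blast
qed

lemma tproc: "0 \<le> t \<Longrightarrow> \<tau> t = Some i \<Longrightarrow> i < n \<and> r i \<le> t \<and> SR i t > 0"
proof -
  have H: "\<forall>t\<ge>0. \<forall>i. \<tau> t = Some i \<longrightarrow> i < n \<and> r i \<le> t \<and> srem N k p \<tau> i t > 0"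
    using ss unfolding srpt1N_schedule_def by (elim conjE)
  show "0 \<le> t \<Longrightarrow> \<tau> t = Some i \<Longrightarrow> i < n \<and> r i \<le> t \<and> SR i t > 0" using H[rule_format, of t i] by simp
qed

lemma MP_seg: "MP i l t = (\<Sum>m<N. measure lborel (seg \<sigma> (\<lambda>g. g m = Some (i, l)) 0 t))"
  unfolding mproc_def seg_def by simp

lemma SP_seg: "SP i t = real N * measure lborel (seg \<tau> (\<lambda>g. g = Some i) 0 t)"
  unfolding sproc_def seg_def by simp

lemma MP_nonneg: "0 \<le> MP i l t"
  unfolding MP_seg by (intro sum_nonneg) simp

lemma MP_split: "0 \<le> a \<Longrightarrow> a \<le> b \<Longrightarrow>
   MP i l b = MP i l a + (\<Sum>m<N. measure lborel (seg \<sigma> (\<lambda>g. g m = Some (i, l)) a b))"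
proof -
  assume ab: "0 \<le> a" "a \<le> b"
  have "MP i l b = (\<Sum>m<N. measure lborel (seg \<sigma> (\<lambda>g. g m = Some (i, l)) 0 a) + measure lborel (seg \<sigma> (\<lambda>g. g m = Some (i, l)) a b))"
    unfolding MP_seg by (intro sum.cong refl seg_split[OF pc_sigma ab])
  then show ?thesis unfolding MP_seg sum.distrib .
qed

lemma MP_mono: assumes "0 \<le> a" "a \<le> b" shows "MP i l a \<le> MP i l b" "MP i l b \<le> MP i l a + real N * (b - a)"
proof -
  have "(\<Sum>m<N. measure lborel (seg \<sigma> (\<lambda>g. g m = Some (i, l)) a b)) \<le> (\<Sum>m<N. b - a)"
    using assms by (intro sum_mono seg_le) auto
  then show "MP i l b \<le> MP i l a + real N * (b - a)" using MP_split[OF assms, of i l] by simp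
  show "MP i l a \<le> MP i l b" using MP_split[OF assms, of i l] by (simp add: sum_nonneg)
qed

lemma MP_const: assumes "0 \<le> a" "a \<le> b" "\<And>w. a \<le> w \<Longrightarrow> w < b \<Longrightarrow> \<sigma> w = \<sigma> a"
  shows "MP i l b = MP i l a + (b - a) * cnt i l a"
proof -
  have "measure lborel (seg \<sigma> (\<lambda>g. g m = Some (i, l)) a b) = (if \<sigma> a m = Some (i, l) then b - a else 0)" for m
  proof (cases "\<sigma> a m = Some (i, l)")
    case True
    have "measure lborel (seg \<sigma> (\<lambda>g. g m = Some (i, l)) a b) = b - a"
    proof (rule seg_all[OF assms(2)])
      fix w assume "a \<le> w" "w < b" then have "\<sigma> w = \<sigma> a" by (rule assms(3))
      then show "\<sigma> w m = Some (i, l)" using True by simp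
    qed
    then show ?thesis using True by simp
  next
    case False
    have "measure lborel (seg \<sigma> (\<lambda>g. g m = Some (i, l)) a b) = 0"
    proof (rule seg_none)
      fix w assume "a \<le> w" "w < b" then have "\<sigma> w = \<sigma> a" by (rule assms(3))
      then show "\<not> \<sigma> w m = Some (i, l)" using False by simp
    qed
    then show ?thesis using False by simp
  qed
  then have "(\<Sum>m<N. measure lborel (seg \<sigma> (\<lambda>g. g m = Some (i, l)) a b)) = (\<Sum>m<N. if \<sigma> a m = Some (i, l) then b - a else 0)"
    by (intro sum.cong refl)
  also have "\<dots> = (b - a) * cnt i l a" unfolding cnt_def sum_distrib_left by (intro sum.cong refl) simp
  finally show ?thesis using MP_split[OF assms(1,2), of i l] by simp
qed

lemma MP_zero: "t \<le> 0 \<Longrightarrow> MP i l t = 0"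
  unfolding MP_seg seg_def by simp

lemma MP_pos: "MP i l t > 0 \<Longrightarrow> \<exists>w m. 0 \<le> w \<and> w < t \<and> m < N \<and> \<sigma> w m = Some (i, l)"
proof -
  assume "MP i l t > 0"
  have "\<exists>m<N. measure lborel (seg \<sigma> (\<lambda>g. g m = Some (i, l)) 0 t) > 0"
  proof (rule ccontr)
    assume nn: "\<not> ?thesis"
    have "MP i l t \<le> 0" unfolding MP_seg
    proof (intro sum_nonpos)
      fix m assume "m \<in> {..<N}" then show "measure lborel (seg \<sigma> (\<lambda>g. g m = Some (i, l)) 0 t) \<le> 0"
        using nn not_less by blast
    qed
    then show False using \<open>MP i l t > 0\<close> by simp
  qed
  then obtain m where "m < N" "measure lborel (seg \<sigma> (\<lambda>g. g m = Some (i, l)) 0 t) > 0" by blast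
  then show ?thesis using seg_pos by fastforce
qed

lemma MP_unrel: "i < n \<Longrightarrow> t \<le> r i \<Longrightarrow> MP i l t = 0"
proof (rule ccontr)
  assume "i < n" "t \<le> r i" "MP i l t \<noteq> 0"
  then have "MP i l t > 0" using MP_nonneg[of i l t] by simp
  then obtain w m where "0 \<le> w" "w < t" "m < N" "\<sigma> w m = Some (i, l)" using MP_pos by blast
  then show False using procd \<open>t \<le> r i\<close> by fastforce
qed

lemma SP_const: assumes "0 \<le> a" "a \<le> b" "\<And>w. a \<le> w \<Longrightarrow> w < b \<Longrightarrow> \<tau> w = \<tau> a"
  shows "SP i b = SP i a + real N * (b - a) * (if \<tau> a = Some i then 1 else 0)"
proof -
  have "measure lborel (seg \<tau> (\<lambda>g. g = Some i) a b) = (if \<tau> a = Some i then b - a else 0)"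
  proof (cases "\<tau> a = Some i")
    case True
    have "measure lborel (seg \<tau> (\<lambda>g. g = Some i) a b) = b - a"
    proof (rule seg_all[OF assms(2)])
      fix w assume "a \<le> w" "w < b" then have "\<tau> w = \<tau> a" by (rule assms(3))
      then show "\<tau> w = Some i" using True by simp
    qed
    then show ?thesis using True by simp
  next
    case False
    have "measure lborel (seg \<tau> (\<lambda>g. g = Some i) a b) = 0"
    proof (rule seg_none)
      fix w assume "a \<le> w" "w < b" then have "\<tau> w = \<tau> a" by (rule assms(3))
      then show "\<not> \<tau> w = Some i" using False by simp
    qed
    then show ?thesis using False by simp
  qed
  then show ?thesis unfolding SP_seg using seg_split[OF pc_tau assms(1,2), of "\<lambda>g. g = Some i"]
    by (simp add: algebra_simps)
qed

lemma SP_unrel: "i < n \<Longrightarrow> t \<le> r i \<Longrightarrow> SP i t = 0"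
proof -
  assume a: "i < n" "t \<le> r i"
  have "measure lborel (seg \<tau> (\<lambda>g. g = Some i) 0 t) = 0"
    by (rule seg_none) (use a tproc in fastforce)
  then show ?thesis unfolding SP_seg by simp
qed

lemma cnt_zero: "\<not> running i l t \<Longrightarrow> cnt i l t = 0"
  unfolding cnt_def running_def by (intro sum.neutral) auto

lemma cnt_ge1: "m < N \<Longrightarrow> \<sigma> t m = Some (i, l) \<Longrightarrow> cnt i l t \<ge> 1"
proof -
  assume m: "m < N" "\<sigma> t m = Some (i, l)"
  have "(\<Sum>m\<in>{m}. if \<sigma> t m = Some (i, l) then 1 else (0::real)) \<le> cnt i l t"
    unfolding cnt_def using m by (intro sum_mono2) auto
  then show ?thesis using m by simp
qed

lemma cnt_nonneg: "cnt i l t \<ge> 0"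
  unfolding cnt_def by (intro sum_nonneg) auto

lemma MR_def': "MR i l t = p i l - MP i l t" by (simp add: mrem_def)
lemma MJ_def': "MJ i t = (\<Sum>l<k i. MR i l t)" by (simp add: mjrem_def)
lemma SR_def': "SR i t = PP i - SP i t" by (simp add: srem_def PP_def)

end



context sched begin

lemma MR_le_p: "MR i l t \<le> p i l"
  unfolding MR_def' using MP_nonneg[of i l t] by linarith

lemma MR_mono: "0 \<le> u \<Longrightarrow> u \<le> s \<Longrightarrow> MR i l s \<le> MR i l u"
  unfolding MR_def' using MP_mono(1)[of u s i l] by linarith

lemma MR_lip: "0 \<le> u \<Longrightarrow> u \<le> s \<Longrightarrow> MR i l u - real N * (s - u) \<le> MR i l s"
  unfolding MR_def' using MP_mono(2)[of u s i l] by linarith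

lemma MR_const: "0 \<le> a \<Longrightarrow> a \<le> b \<Longrightarrow> (\<And>w. a \<le> w \<Longrightarrow> w < b \<Longrightarrow> \<sigma> w = \<sigma> a) \<Longrightarrow>
   MR i l b = MR i l a - (b - a) * cnt i l a"
proof -
  assume "0 \<le> a" "a \<le> b" "\<And>w. a \<le> w \<Longrightarrow> w < b \<Longrightarrow> \<sigma> w = \<sigma> a"
  then have "MP i l b = MP i l a + (b - a) * cnt i l a" by (rule MP_const)
  then show ?thesis unfolding MR_def' by linarith
qed

lemma MR_nonneg:
  assumes i: "i < n" "l < k i" and t: "0 \<le> t"
  shows "0 \<le> MR i l t"
proof (rule real_ind0[where P="\<lambda>t. 0 \<le> MR i l t", OF _ _ t])
  fix s :: real assume s: "0 \<le> s" and IH: "\<And>u. 0 \<le> u \<Longrightarrow> u < s \<Longrightarrow> 0 \<le> MR i l u"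
  show "0 \<le> MR i l s"
  proof (cases "s = 0")
    case True
    have "p i l > 0" using ppos i by blast
    then show ?thesis unfolding MR_def' using MP_zero[of 0 i l] True by simp
  next
    case False
    then have s0: "0 < s" using s by simp
    obtain e where e: "e > 0" "\<And>v. s - e < v \<Longrightarrow> v < s \<Longrightarrow> \<sigma> v = \<sigma> (s - e / 2)"
      using pconst_left[OF pc_sigma, of s] by blast
    define a where "a = max 0 (s - e)"
    have a: "0 \<le> a" "a < s" using s0 e(1) by (auto simp: a_def)
    show ?thesis
    proof (cases "\<exists>m<N. \<sigma> (s - e / 2) m = Some (i, l)")
      case True
      then obtain m where m: "m < N" "\<sigma> (s - e / 2) m = Some (i, l)" by blast
      show ?thesis
      proof (rule lim_left[OF a(2)])
        show "0 \<le> real N" by simp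
        fix u assume u: "a < u" "u < s"
        have "\<sigma> u = \<sigma> (s - e / 2)" using u by (intro e(2)) (auto simp: a_def)
        then have "\<sigma> u m = Some (i, l)" using m by simp
        moreover have "0 \<le> u" using u a by simp
        ultimately have "0 < MR i l u" using procd[OF _ m(1), of u i l] by simp
        moreover have "MR i l u - real N * (s - u) \<le> MR i l s" using u a by (intro MR_lip) auto
        ultimately show "0 \<le> MR i l s + real N * (s - u)" by simp
      qed
    next
      case False
      define u where "u = (a + s) / 2"
      have u: "0 \<le> u" "u < s" "a < u" using a by (auto simp: u_def)
      have cu: "\<sigma> u = \<sigma> (s - e / 2)" using u by (intro e(2)) (auto simp: a_def)
      have const: "\<sigma> w = \<sigma> u" if "u \<le> w" "w < s" for w
      proof -
        have "\<sigma> w = \<sigma> (s - e / 2)" using that u by (intro e(2)) (auto simp: a_def)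
        then show ?thesis using cu by simp
      qed
      have "\<not> running i l u" using False cu unfolding running_def by simp
      then have "cnt i l u = 0" by (rule cnt_zero)
      moreover have "MR i l s = MR i l u - (s - u) * cnt i l u"
        by (rule MR_const[OF u(1) less_imp_le[OF u(2)] const])
      ultimately have "MR i l s = MR i l u" by simp
      then show ?thesis using IH[OF u(1,2)] by simp
    qed
  qed
next
  fix s :: real assume s: "0 \<le> s" and IH: "\<And>u. 0 \<le> u \<Longrightarrow> u \<le> s \<Longrightarrow> 0 \<le> MR i l u"
  obtain e where e: "e > 0" "\<And>v. s \<le> v \<Longrightarrow> v < s + e \<Longrightarrow> \<sigma> v = \<sigma> s"
    using pconst_right[OF pc_sigma, of s] by blast
  have "eventually (\<lambda>v. v \<in> {s<..<s+e}) (at_right s)"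
    using e(1) by (intro eventually_at_right_real) simp
  then show "eventually (\<lambda>t. 0 \<le> MR i l t) (at_right s)"
  proof (rule eventually_mono)
    fix v assume v: "v \<in> {s<..<s+e}"
    have const: "\<sigma> w = \<sigma> s" if "s \<le> w" "w < v" for w using that v by (intro e(2)) auto
    show "0 \<le> MR i l v"
    proof (cases "running i l s")
      case True
      then obtain m where m: "m < N" "\<sigma> s m = Some (i, l)" unfolding running_def by blast
      have "\<sigma> v = \<sigma> s" using v by (intro e(2)) auto
      then have "\<sigma> v m = Some (i, l)" using m by simp
      moreover have "0 \<le> v" using v s by simp
      ultimately show ?thesis using procd[OF _ m(1), of v i l] by simp
    next
      case False
      then have "cnt i l s = 0" by (rule cnt_zero)
      moreover have "MR i l v = MR i l s - (v - s) * cnt i l s"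
        using v by (intro MR_const[OF s _ const]) auto
      ultimately have "MR i l v = MR i l s" by simp
      then show ?thesis using IH[OF s] by simp
    qed
  qed
qed

lemma MJ_nonneg: "i < n \<Longrightarrow> 0 \<le> t \<Longrightarrow> 0 \<le> MJ i t"
  unfolding MJ_def' by (intro sum_nonneg MR_nonneg) auto

lemma MR_le_MJ: "i < n \<Longrightarrow> l < k i \<Longrightarrow> 0 \<le> t \<Longrightarrow> MR i l t \<le> MJ i t"
proof -
  assume a: "i < n" "l < k i" "0 \<le> t"
  have "(\<Sum>l\<in>{l}. MR i l t) \<le> (\<Sum>l<k i. MR i l t)"
    using a by (intro sum_mono2) (auto intro: MR_nonneg)
  then show ?thesis by (simp add: MJ_def')
qed

lemma MJ_mono: "0 \<le> u \<Longrightarrow> u \<le> s \<Longrightarrow> MJ i s \<le> MJ i u"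
  unfolding MJ_def' by (intro sum_mono MR_mono) auto

lemma MJ_const: "0 \<le> a \<Longrightarrow> a \<le> b \<Longrightarrow> (\<And>w. a \<le> w \<Longrightarrow> w < b \<Longrightarrow> \<sigma> w = \<sigma> a) \<Longrightarrow>
   MJ i b = MJ i a - (b - a) * (\<Sum>l<k i. cnt i l a)"
proof -
  assume a: "0 \<le> a" "a \<le> b" "\<And>w. a \<le> w \<Longrightarrow> w < b \<Longrightarrow> \<sigma> w = \<sigma> a"
  have "MJ i b = (\<Sum>l<k i. MR i l a - (b - a) * cnt i l a)"
    unfolding MJ_def' by (intro sum.cong refl MR_const[OF a(1,2)]) (rule a(3))
  then show ?thesis by (simp add: MJ_def' sum_subtractf sum_distrib_left)
qed

lemma MJ_lower: "0 \<le> s \<Longrightarrow> s \<le> v \<Longrightarrow> MJ i s - real (k i) * real N * (v - s) \<le> MJ i v"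
proof -
  assume a: "0 \<le> s" "s \<le> v"
  have "(\<Sum>l<k i. MR i l s - real N * (v - s)) \<le> (\<Sum>l<k i. MR i l v)"
    using a by (intro sum_mono MR_lip) auto
  then show ?thesis by (simp add: MJ_def' sum_subtractf)
qed

lemma PP_pos: "i < n \<Longrightarrow> 0 < PP i"
proof -
  assume i: "i < n"
  then have "0 \<in> {..<k i}" using rk by auto
  then have "{..<k i} \<noteq> {}" by blast
  then show ?thesis unfolding PP_def using ppos i by (intro sum_pos) auto
qed

lemma MJ_unrel: "i < n \<Longrightarrow> t \<le> r i \<Longrightarrow> MJ i t = PP i"
  unfolding MJ_def' PP_def MR_def' using MP_unrel by simp

lemma SR_unrel: "i < n \<Longrightarrow> t \<le> r i \<Longrightarrow> SR i t = PP i"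
  unfolding SR_def' using SP_unrel by simp

lemma MJ_0: "MJ i 0 = PP i"
  unfolding MJ_def' PP_def MR_def' using MP_zero by simp

lemma SR_0: "SR i 0 = PP i"
  unfolding SR_def' SP_seg seg_def by simp

end



context sched begin

definition "busy t \<longleftrightarrow> (\<exists>j<n. \<exists>l<k j. r j \<le> t \<and> 0 < MR j l t \<and> \<not> running j l t \<and>
    (\<not> np j l \<or> MP j l t = 0) \<and> MJ j t \<le> y)"
definition "rho m t = (case \<sigma> t m of None \<Rightarrow> 0 | Some (i, l) \<Rightarrow> if np i l \<and> y < MJ i t then MR i l t else 0)"
definition "notrun i t = {l. l < k i \<and> \<not> running i l t}"
definition "kap i t = (if y < MJ i t \<and> (\<exists>l<k i. running i l t) \<and> (\<Sum>l\<in>notrun i t. MR i l t) \<le> y then y else 0)"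
definition cW :: "(nat \<Rightarrow> real \<Rightarrow> real) \<Rightarrow> nat \<Rightarrow> real \<Rightarrow> real" where
  "cW R i t = (if r i \<le> t \<and> 0 < R i t \<and> R i t \<le> y then R i t else 0)"
definition "Psi t = (\<Sum>i<n. cW MJ i t + kap i t - cW SR i t) + (\<Sum>m<N. rho m t)"
definition "arr i a b = (if a < r i \<and> r i = b \<and> PP i \<le> y then PP i else 0)"

lemma Wle_sum: "Wle n r R y t = (\<Sum>i<n. cW R i t)"
proof -
  have "{i. i < n \<and> r i \<le> t \<and> 0 < R i t \<and> R i t \<le> y} = {i \<in> {..<n}. r i \<le> t \<and> 0 < R i t \<and> R i t \<le> y}"
    by auto
  moreover have "(\<Sum>i<n. cW R i t) = sum (\<lambda>i. R i t) {i \<in> {..<n}. r i \<le> t \<and> 0 < R i t \<and> R i t \<le> y}"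
    unfolding cW_def by (rule sum.inter_filter[symmetric]) simp
  ultimately show ?thesis unfolding Wle_def by simp
qed

lemma cW_nonneg: "0 \<le> cW R i t" unfolding cW_def by auto
lemma cW_le: "cW R i t \<le> y" unfolding cW_def using y0 by auto
lemma kap_nonneg: "0 \<le> kap i t" using y0 by (simp add: kap_def)
lemma kap_le: "kap i t \<le> y" using y0 by (simp add: kap_def)
lemma arr_nonneg: "i < n \<Longrightarrow> 0 \<le> arr i a b" unfolding arr_def using PP_pos[of i] by auto
lemma notrun_fin: "finite (notrun i t)" unfolding notrun_def by auto

lemma rho_nonneg: "0 \<le> t \<Longrightarrow> m < N \<Longrightarrow> 0 \<le> rho m t"
proof -
  assume a: "0 \<le> t" "m < N"
  show ?thesis
  proof (cases "\<sigma> t m")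
    case None then show ?thesis by (simp add: rho_def)
  next
    case (Some x)
    obtain i l where x: "x = (i, l)" by (cases x)
    have "0 < MR i l t" using procd[OF a, of i l] Some x by simp
    then show ?thesis using Some x by (simp add: rho_def)
  qed
qed

lemma eta_ge: "i < n \<Longrightarrow> l < k i \<Longrightarrow> np i l \<Longrightarrow> p i l \<le> eta n k p np"
  and eta_nonneg: "0 \<le> eta n k p np"
proof -
  have fin: "finite ({0} \<union> {p i l |i l. i < n \<and> l < k i \<and> np i l})"
  proof -
    have sub: "{p i l |i l. i < n \<and> l < k i \<and> np i l} \<subseteq> (\<lambda>(i, l). p i l) ` (SIGMA i:{..<n}. {..<k i})"
      by auto
    have "finite {p i l |i l. i < n \<and> l < k i \<and> np i l}" by (rule finite_subset[OF sub]) auto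
    then show ?thesis by simp
  qed
  show "0 \<le> eta n k p np" unfolding eta_def using fin by (intro Max_ge) auto
  assume "i < n" "l < k i" "np i l"
  then show "p i l \<le> eta n k p np" unfolding eta_def using fin by (intro Max_ge) auto
qed

lemma rho_le: "0 \<le> t \<Longrightarrow> m < N \<Longrightarrow> rho m t \<le> eta n k p np"
proof -
  assume a: "0 \<le> t" "m < N"
  show ?thesis
  proof (cases "\<sigma> t m")
    case None then show ?thesis using eta_nonneg by (simp add: rho_def)
  next
    case (Some x)
    obtain i l where x: "x = (i, l)" by (cases x)
    have il: "i < n" "l < k i" using procd[OF a, of i l] Some x by auto
    show ?thesis
    proof (cases "np i l \<and> y < MJ i t")
      case True
      then have "rho m t = MR i l t" using Some x by (simp add: rho_def)
      also have "\<dots> \<le> p i l" by (rule MR_le_p)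
      also have "\<dots> \<le> eta n k p np" using il True by (intro eta_ge) auto
      finally show ?thesis .
    next
      case False
      then have "rho m t = 0" using Some x by (auto simp: rho_def)
      then show ?thesis using eta_nonneg by simp
    qed
  qed
qed

lemma busy_machine: "busy t \<Longrightarrow> 0 \<le> t \<Longrightarrow> m < N \<Longrightarrow>
   \<exists>i l. \<sigma> t m = Some (i, l) \<and> ((np i l \<and> 0 < MP i l t) \<or> MJ i t \<le> y)"
proof -
  assume b: "busy t" and t: "0 \<le> t" and m: "m < N"
  then obtain j l where j: "j < n" "l < k j" "r j \<le> t" "0 < MR j l t" "\<not> running j l t"
    "\<not> np j l \<or> MP j l t = 0" "MJ j t \<le> y" unfolding busy_def by blast
  from prio[OF t j(1-6) m] obtain i' l' where
    "\<sigma> t m = Some (i', l')" "(np i' l' \<and> MP i' l' t > 0) \<or> MJ i' t \<le> MJ j t" by blast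
  then show ?thesis using j(7) by force
qed

lemma big_running: "busy t \<Longrightarrow> 0 \<le> t \<Longrightarrow> m < N \<Longrightarrow> \<sigma> t m = Some (i, l) \<Longrightarrow> y < MJ i t \<Longrightarrow>
   np i l \<and> 0 < MP i l t"
  using busy_machine by fastforce

lemma run_back:
  assumes u: "0 \<le> u" "u < s" and const: "\<And>w. u \<le> w \<Longrightarrow> w < s \<Longrightarrow> \<sigma> w = \<sigma> u"
    and m: "m < N" "\<sigma> s m = Some (i, l)" and nl: "np i l" and mp: "0 < MP i l s"
  shows "\<sigma> u m = Some (i, l)"
proof -
  have s0: "0 \<le> s" using u by simp
  have mrs: "0 < MR i l s" using procd[OF s0 m(1)] m(2) by simp
  have mru: "0 < MR i l u" using MR_mono[of u s i l] u mrs by simp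
  obtain w m' where w: "0 \<le> w" "w < s" "m' < N" "\<sigma> w m' = Some (i, l)" using MP_pos[OF mp] by blast
  have "\<sigma> u m' = Some (i, l)"
  proof (cases "u \<le> w")
    case True
    have "\<sigma> w = \<sigma> u" using True w(2) by (rule const)
    then show ?thesis using w(4) by simp
  next
    case False
    then show ?thesis using contin[OF w(1) _ w(3) nl w(4) mru] by simp
  qed
  then have "\<sigma> s m' = Some (i, l)" using contin[OF u(1) _ w(3) nl _ mrs] u by simp
  then have "m' = m" using uniq[OF s0 w(3) m(1)] m(2) by simp
  then show ?thesis using \<open>\<sigma> u m' = Some (i, l)\<close> by simp
qed

lemma cS_step:
  assumes ab: "0 \<le> a" "a \<le> b" and const: "\<And>w. a \<le> w \<Longrightarrow> w < b \<Longrightarrow> \<tau> w = \<tau> a"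
    and i: "i < n" and rel: "r i \<le> b \<longrightarrow> r i \<le> a \<or> r i = b"
  shows "cW SR i a - real N * (b - a) * (if \<tau> a = Some i then 1 else 0) + arr i a b \<le> cW SR i b"
proof -
  define d where "d = real N * (b - a) * (if \<tau> a = Some i then 1 else 0)"
  have d0: "0 \<le> d" using ab by (simp add: d_def)
  have SRb: "SR i b = SR i a - d" unfolding SR_def' d_def using SP_const[OF ab const, of i] by simp
  show ?thesis
  proof (cases "r i \<le> a")
    case True
    then have arr0: "arr i a b = 0" by (simp add: arr_def)
    show ?thesis
    proof (cases "0 < SR i a \<and> SR i a \<le> y")
      case h: True
      then have cwa: "cW SR i a = SR i a" using True by (simp add: cW_def)
      show ?thesis
      proof (cases "0 < SR i b")
        case True
        then have "cW SR i b = SR i b" using h SRb d0 \<open>r i \<le> a\<close> ab by (simp add: cW_def)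
        then show ?thesis using cwa arr0 SRb d_def by simp
      next
        case False
        then show ?thesis using cwa arr0 SRb d_def cW_nonneg[of SR i b] by simp
      qed
    next
      case False
      then have "cW SR i a = 0" by (auto simp: cW_def)
      then show ?thesis using arr0 d0 d_def cW_nonneg[of SR i b] by simp
    qed
  next
    case False
    then have cwa: "cW SR i a = 0" by (simp add: cW_def)
    show ?thesis
    proof (cases "r i = b")
      case True
      have "SR i b = PP i" using SR_unrel[OF i] True by simp
      then have "cW SR i b = arr i a b" using True False PP_pos[OF i] by (auto simp: cW_def arr_def)
      then show ?thesis using cwa d0 d_def by simp
    next
      case nb: False
      then have "arr i a b = 0" by (simp add: arr_def)
      then show ?thesis using cwa d0 d_def cW_nonneg[of SR i b] by simp
    qed
  qed
qed

lemma job_nonbusy: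
  assumes t: "0 \<le> t" and nb: "\<not> busy t" and i: "i < n"
  shows "cW MJ i t + kap i t - cW SR i t \<le> (if i \<in> {i. \<exists>m<N. \<exists>l. \<sigma> t m = Some (i, l)} then y else 0)"
proof -
  have run: "i \<in> {i. \<exists>m<N. \<exists>l. \<sigma> t m = Some (i, l)}" if "running i l t" for l
    using that unfolding running_def by blast
  show ?thesis
  proof (cases "r i \<le> t \<and> 0 < MJ i t \<and> MJ i t \<le> y")
    case True
    have k0: "kap i t = 0" using True by (simp add: kap_def)
    have "\<exists>l<k i. 0 < MR i l t"
    proof (rule ccontr)
      assume "\<not> ?thesis"
      then have "MJ i t \<le> 0" unfolding MJ_def' by (intro sum_nonpos) (meson lessThan_iff not_less)
      then show False using True by simp
    qed
    then obtain l where l: "l < k i" "0 < MR i l t" by blast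
    have "running i l t"
    proof (rule ccontr)
      assume nr: "\<not> running i l t"
      then have "np i l \<and> MP i l t \<noteq> 0" using nb i l True unfolding busy_def by blast
      then have "np i l" "0 < MP i l t" using MP_nonneg[of i l t] by auto
      then obtain w m where w: "0 \<le> w" "w < t" "m < N" "\<sigma> w m = Some (i, l)" using MP_pos by blast
      have "\<sigma> t m = Some (i, l)" using contin[OF w(1) _ w(3) \<open>np i l\<close> w(4) l(2)] w(2) by simp
      then show False using nr w(3) unfolding running_def by blast
    qed
    then have "i \<in> {i. \<exists>m<N. \<exists>l. \<sigma> t m = Some (i, l)}" by (rule run)
    then show ?thesis using k0 cW_le[of MJ i t] cW_nonneg[of SR i t] by simp
  next
    case False
    then have c0: "cW MJ i t = 0" by (auto simp: cW_def)
    show ?thesis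
    proof (cases "kap i t = 0")
      case True then show ?thesis using c0 cW_nonneg[of SR i t] y0 by simp
    next
      case False
      then obtain l where "running i l t" unfolding kap_def by (auto split: if_splits)
      then have "i \<in> {i. \<exists>m<N. \<exists>l. \<sigma> t m = Some (i, l)}" by (rule run)
      then show ?thesis using c0 kap_le[of i t] cW_nonneg[of SR i t] by simp
    qed
  qed
qed

lemma nonbusy_bound:
  assumes t: "0 \<le> t" and nb: "\<not> busy t"
  shows "Psi t \<le> real N * y + real N * eta n k p np"
proof -
  define J where "J = {i. \<exists>m<N. \<exists>l. \<sigma> t m = Some (i, l)}"
  have "(\<Sum>i<n. cW MJ i t + kap i t - cW SR i t) \<le> (\<Sum>i<n. if i \<in> J then y else 0)"
    unfolding J_def by (intro sum_mono job_nonbusy[OF t nb]) auto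
  also have "\<dots> = y * real (card ({..<n} \<inter> J))"
    by (simp add: sum.inter_restrict[symmetric] sum.If_cases)
  also have "\<dots> \<le> y * real N"
  proof -
    have "{..<n} \<inter> J \<subseteq> (\<lambda>m. fst (the (\<sigma> t m))) ` {..<N}"
    proof
      fix i assume "i \<in> {..<n} \<inter> J"
      then obtain m l where "m < N" "\<sigma> t m = Some (i, l)" unfolding J_def by blast
      then show "i \<in> (\<lambda>m. fst (the (\<sigma> t m))) ` {..<N}" by force
    qed
    then have "card ({..<n} \<inter> J) \<le> card ((\<lambda>m. fst (the (\<sigma> t m))) ` {..<N})"
      by (intro card_mono) auto
    also have "\<dots> \<le> N" using card_image_le[of "{..<N}"] by simp
    finally show ?thesis using y0 by (intro mult_left_mono) auto
  qed
  finally have A: "(\<Sum>i<n. cW MJ i t + kap i t - cW SR i t) \<le> real N * y" by (simp add: mult.commute)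
  have B: "(\<Sum>m<N. rho m t) \<le> (\<Sum>m<N. eta n k p np)" by (intro sum_mono rho_le[OF t]) auto
  show ?thesis using A B unfolding Psi_def by simp
qed

end



context sched begin

lemma Psi_0: assumes b: "busy 0" shows "Psi 0 \<le> 0"
proof -
  have job: "cW MJ i 0 + kap i 0 - cW SR i 0 = 0" if i: "i < n" for i
  proof -
    have "kap i 0 = 0"
    proof (rule ccontr)
      assume "kap i 0 \<noteq> 0"
      then obtain l where l: "l < k i" "running i l 0" "y < MJ i 0" unfolding kap_def by (auto split: if_splits)
      then obtain m where m: "m < N" "\<sigma> 0 m = Some (i, l)" unfolding running_def by blast
      have "0 < MP i l 0" using big_running[OF b _ m l(3)] by simp
      then show False using MP_zero[of 0 i l] by simp
    qed
    then show ?thesis unfolding cW_def using MJ_0[of i] SR_0[of i] by simp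
  qed
  have rh: "rho m 0 = 0" if m: "m < N" for m
  proof (cases "\<sigma> 0 m")
    case None then show ?thesis by (simp add: rho_def)
  next
    case (Some x)
    obtain i l where x: "x = (i, l)" by (cases x)
    have "\<not> (np i l \<and> y < MJ i 0)"
    proof
      assume "np i l \<and> y < MJ i 0"
      then have "0 < MP i l 0" using big_running[OF b _ m, of i l] Some x by simp
      then show False using MP_zero[of 0 i l] by simp
    qed
    then show ?thesis using Some x by (auto simp: rho_def)
  qed
  show ?thesis unfolding Psi_def using job rh by simp
qed

lemma tau_sum: "(\<Sum>i<n. if \<tau> a = Some i then 1 else 0::real) \<le> 1"
proof (cases "\<tau> a")
  case None then show ?thesis by simp
next
  case (Some i0)
  have "(\<Sum>i<n. if \<tau> a = Some i then 1 else 0::real) = (\<Sum>i<n. if i0 = i then 1 else 0::real)"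
    using Some by (intro sum.cong) auto
  also have "\<dots> \<le> 1" by (simp add: sum.delta)
  finally show ?thesis .
qed

lemma mjob_left:
  assumes u: "0 \<le> u" "u < s" and const: "\<And>w. u \<le> w \<Longrightarrow> w < s \<Longrightarrow> \<sigma> w = \<sigma> u"
    and i: "i < n" and rel: "r i \<le> s \<longrightarrow> r i \<le> u \<or> r i = s" and b: "busy s"
  shows "cW MJ i s + kap i s \<le> cW MJ i u + kap i u + arr i u s"
proof -
  have s0: "0 \<le> s" using u by simp
  have us: "u \<le> s" using u by simp
  have NR: "MR i l s = MR i l u" if "\<not> running i l u" for l
  proof -
    have "MR i l s = MR i l u - (s - u) * cnt i l u" by (rule MR_const[OF u(1) us const])
    then show ?thesis using cnt_zero[OF that] by simp
  qed
  have RB: "running i l u" if r1: "running i l s" and r2: "y < MJ i s" for l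
  proof -
    obtain m where m: "m < N" "\<sigma> s m = Some (i, l)" using r1 unfolding running_def by blast
    have "np i l \<and> 0 < MP i l s" by (rule big_running[OF b s0 m r2])
    then have "\<sigma> u m = Some (i, l)" using run_back[OF u const m] by blast
    then show ?thesis using m(1) unfolding running_def by blast
  qed
  have k0: "kap i s = 0" if "\<not> y < MJ i s" using that by (simp add: kap_def)
  have nn: "0 \<le> cW MJ i u" "0 \<le> kap i u" "0 \<le> arr i u s"
    using cW_nonneg kap_nonneg arr_nonneg[OF i] by auto
  show ?thesis
  proof (cases "r i \<le> u")
    case False
    show ?thesis
    proof (cases "r i = s")
      case True
      have mj: "MJ i s = PP i" using MJ_unrel[OF i] True by simp
      have "kap i s = 0"
      proof (rule ccontr)
        assume "kap i s \<noteq> 0"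
        then obtain l where l: "l < k i" "running i l s" "y < MJ i s" unfolding kap_def by (auto split: if_splits)
        then obtain m where m: "m < N" "\<sigma> s m = Some (i, l)" unfolding running_def by blast
        have "0 < MP i l s" using big_running[OF b s0 m l(3)] by simp
        then show False using MP_unrel[OF i, of s l] True by simp
      qed
      moreover have "cW MJ i s \<le> arr i u s" using mj True False u PP_pos[OF i] by (auto simp: cW_def arr_def)
      ultimately show ?thesis using nn by simp
    next
      case nr: False
      then have "s < r i" using rel False by auto
      then have "cW MJ i s = 0" by (simp add: cW_def)
      moreover have "kap i s = 0"
      proof (rule ccontr)
        assume "kap i s \<noteq> 0"
        then obtain l where l: "l < k i" "running i l s" unfolding kap_def by (auto split: if_splits)
        then obtain m where m: "m < N" "\<sigma> s m = Some (i, l)" unfolding running_def by blast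
        then show False using procd[OF s0 m(1) m(2)] \<open>s < r i\<close> by simp
      qed
      ultimately show ?thesis using nn by simp
    qed
  next
    case ru: True
    show ?thesis
    proof (cases "MJ i s \<le> y")
      case small: True
      have ks: "kap i s = 0" using k0 small by simp
      show ?thesis
      proof (cases "MJ i u \<le> y")
        case True
        have "cW MJ i s \<le> cW MJ i u"
        proof (cases "0 < MJ i s")
          case True
          have "MJ i s \<le> MJ i u" by (rule MJ_mono[OF u(1) us])
          then show ?thesis using True small \<open>MJ i u \<le> y\<close> ru us by (simp add: cW_def)
        next
          case False then show ?thesis using cW_nonneg by (simp add: cW_def)
        qed
        then show ?thesis using ks nn by simp
      next
        case False
        have "kap i u = y"
        proof -
          have ex: "\<exists>l<k i. running i l u"
          proof (rule ccontr)
            assume "\<not> ?thesis"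
            then have "MJ i s = MJ i u" unfolding MJ_def' using NR by (intro sum.cong) auto
            then show False using small False by simp
          qed
          have "(\<Sum>l\<in>notrun i u. MR i l u) = (\<Sum>l\<in>notrun i u. MR i l s)"
            using NR by (intro sum.cong) (auto simp: notrun_def)
          also have "\<dots> \<le> (\<Sum>l<k i. MR i l s)"
            using i s0 by (intro sum_mono2) (auto simp: notrun_def intro: MR_nonneg)
          also have "\<dots> \<le> y" using small by (simp add: MJ_def')
          finally show ?thesis using ex False unfolding kap_def by simp
        qed
        then show ?thesis using ks cW_le[of MJ i s] nn by simp
      qed
    next
      case big: False
      then have "cW MJ i s = 0" by (simp add: cW_def)
      moreover have "kap i s \<le> kap i u"
      proof (cases "kap i s = 0")
        case True then show ?thesis using nn by simp
      next
        case False
        then obtain l0 where l0: "l0 < k i" "running i l0 s" and ys: "y < MJ i s"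
          and sumle: "(\<Sum>l\<in>notrun i s. MR i l s) \<le> y"
          unfolding kap_def by (auto split: if_splits)
        have yu: "y < MJ i u" using MJ_mono[OF u(1) us, of i] ys by simp
        have ru0: "running i l0 u" using RB l0(2) ys by blast
        have sub: "notrun i u \<subseteq> notrun i s" using RB ys unfolding notrun_def by blast
        have "(\<Sum>l\<in>notrun i u. MR i l u) = (\<Sum>l\<in>notrun i u. MR i l s)"
          using NR by (intro sum.cong) (auto simp: notrun_def)
        also have "\<dots> \<le> (\<Sum>l\<in>notrun i s. MR i l s)"
          using i s0 sub by (intro sum_mono2 notrun_fin) (auto simp: notrun_def intro: MR_nonneg)
        also have "\<dots> \<le> y" by (rule sumle)
        finally have "kap i u = y" using yu ru0 l0(1) unfolding kap_def by auto
        then show ?thesis using kap_le by simp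
      qed
      ultimately show ?thesis using nn by simp
    qed
  qed
qed

lemma rho_left:
  assumes u: "0 \<le> u" "u < s" and const: "\<And>w. u \<le> w \<Longrightarrow> w < s \<Longrightarrow> \<sigma> w = \<sigma> u"
    and m: "m < N" and b: "busy s"
  shows "rho m s \<le> rho m u"
proof -
  have s0: "0 \<le> s" using u by simp
  show ?thesis
  proof (cases "\<exists>i l. \<sigma> s m = Some (i, l) \<and> np i l \<and> y < MJ i s")
    case True
    then obtain i l where il: "\<sigma> s m = Some (i, l)" "np i l" "y < MJ i s" by blast
    have "np i l \<and> 0 < MP i l s" by (rule big_running[OF b s0 m il(1,3)])
    then have su: "\<sigma> u m = Some (i, l)" using run_back[OF u const m il(1)] by blast
    have "y < MJ i u" using MJ_mono[OF u(1), of s i] u il(3) by simp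
    then have "rho m u = MR i l u" using su il(2) by (simp add: rho_def)
    moreover have "rho m s = MR i l s" using il by (simp add: rho_def)
    moreover have "MR i l s \<le> MR i l u" using u by (intro MR_mono) auto
    ultimately show ?thesis by simp
  next
    case False
    then have "rho m s = 0" by (auto simp: rho_def split: option.splits)
    then show ?thesis using rho_nonneg[OF u(1) m] by simp
  qed
qed

lemma Psi_left:
  assumes u: "0 \<le> u" "u < s" and const: "\<And>w. u \<le> w \<Longrightarrow> w < s \<Longrightarrow> \<sigma> w = \<sigma> u"
    and constt: "\<And>w. u \<le> w \<Longrightarrow> w < s \<Longrightarrow> \<tau> w = \<tau> u"
    and rel: "\<forall>i<n. r i \<le> s \<longrightarrow> r i \<le> u \<or> r i = s" and b: "busy s"
  shows "Psi s \<le> Psi u + real N * (s - u)"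
proof -
  define ind where "ind i = (if \<tau> u = Some i then 1 else 0::real)" for i
  have job: "cW MJ i s + kap i s - cW SR i s \<le> (cW MJ i u + kap i u - cW SR i u) + real N * (s - u) * ind i"
    if i: "i < n" for i
  proof -
    have A: "cW MJ i s + kap i s \<le> cW MJ i u + kap i u + arr i u s"
      by (rule mjob_left[OF u const i _ b]) (use rel i in auto)
    have B: "cW SR i u - real N * (s - u) * ind i + arr i u s \<le> cW SR i s"
      unfolding ind_def using u i rel by (intro cS_step constt) auto
    show ?thesis using A B by simp
  qed
  have "(\<Sum>i<n. cW MJ i s + kap i s - cW SR i s) \<le> (\<Sum>i<n. (cW MJ i u + kap i u - cW SR i u) + real N * (s - u) * ind i)"
    by (intro sum_mono job) auto
  also have "\<dots> = (\<Sum>i<n. cW MJ i u + kap i u - cW SR i u) + real N * (s - u) * (\<Sum>i<n. ind i)"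
    by (simp add: sum.distrib sum_distrib_left)
  also have "\<dots> \<le> (\<Sum>i<n. cW MJ i u + kap i u - cW SR i u) + real N * (s - u)"
  proof -
    have "(\<Sum>i<n. ind i) \<le> 1" unfolding ind_def by (rule tau_sum)
    then have "real N * (s - u) * (\<Sum>i<n. ind i) \<le> real N * (s - u) * 1"
      using u by (intro mult_left_mono) auto
    then show ?thesis by simp
  qed
  finally have J: "(\<Sum>i<n. cW MJ i s + kap i s - cW SR i s) \<le> (\<Sum>i<n. cW MJ i u + kap i u - cW SR i u) + real N * (s - u)" .
  have R: "(\<Sum>m<N. rho m s) \<le> (\<Sum>m<N. rho m u)" by (intro sum_mono rho_left[OF u const _ b]) auto
  show ?thesis using J R unfolding Psi_def by simp
qed

end



lemma sum_ind_unique: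
  assumes "finite S" and u: "\<And>x y. x \<in> S \<Longrightarrow> y \<in> S \<Longrightarrow> P x \<Longrightarrow> P y \<Longrightarrow> x = y"
  shows "(\<Sum>x\<in>S. if P x then 1 else 0::real) = (if \<exists>x\<in>S. P x then 1 else 0)"
proof -
  have "(\<Sum>x\<in>S. if P x then 1 else 0::real) = (\<Sum>x\<in>{x\<in>S. P x}. 1)"
    using sum.inter_filter[OF assms(1), of "\<lambda>x. 1::real" P] by simp
  also have "\<dots> = real (card {x\<in>S. P x})" by simp
  also have "\<dots> = (if \<exists>x\<in>S. P x then 1 else 0)"
  proof (cases "\<exists>x\<in>S. P x")
    case True
    then obtain x where x: "x \<in> S" "P x" by blast
    then have e: "{x\<in>S. P x} = {x}" using u by blast
    show ?thesis unfolding e using True by simp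
  next
    case False
    then have e: "{x\<in>S. P x} = {}" by blast
    show ?thesis unfolding e using False by simp
  qed
  finally show ?thesis .
qed

context sched begin

lemma Psi_right:
  assumes sv: "0 \<le> s" "s \<le> v" and const: "\<And>w. s \<le> w \<Longrightarrow> w \<le> v \<Longrightarrow> \<sigma> w = \<sigma> s"
    and constt: "\<And>w. s \<le> w \<Longrightarrow> w < v \<Longrightarrow> \<tau> w = \<tau> s"
    and rel: "\<forall>i<n. r i \<le> v \<longrightarrow> r i \<le> s" and big: "\<forall>i<n. y < MJ i s \<longrightarrow> y < MJ i v"
    and b: "busy s"
  shows "Psi v \<le> Psi s"
proof -
  have v0: "0 \<le> v" using sv by simp
  have constl: "\<sigma> w = \<sigma> s" if "s \<le> w" "w < v" for w using that by (intro const) auto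
  have sigv: "\<sigma> v = \<sigma> s" using sv by (intro const) auto
  define A where "A i \<longleftrightarrow> r i \<le> s \<and> 0 < MJ i s \<and> MJ i s \<le> y" for i
  define sm where "sm i = (if A i then (\<Sum>l<k i. cnt i l s) else 0)" for i
  define smallm where "smallm m = (if \<exists>i<n. A i \<and> (\<exists>l<k i. \<sigma> s m = Some (i, l)) then 1 else 0::real)" for m
  define ind where "ind i = (if \<tau> s = Some i then 1 else 0::real)" for i
  have mjv: "MJ i v = MJ i s - (v - s) * (\<Sum>l<k i. cnt i l s)" for i
    by (rule MJ_const[OF sv constl])
  have cntsum: "0 \<le> (\<Sum>l<k i. cnt i l s)" for i by (intro sum_nonneg cnt_nonneg)
  have jobM: "cW MJ i v \<le> cW MJ i s - (v - s) * sm i" if i: "i < n" for i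
  proof (cases "A i")
    case True
    have cs: "cW MJ i s = MJ i s" using True by (simp add: A_def cW_def)
    have "0 \<le> MJ i v" by (rule MJ_nonneg[OF i v0])
    then have "cW MJ i v \<le> MJ i v" by (simp add: cW_def)
    then show ?thesis using cs mjv[of i] True by (simp add: sm_def)
  next
    case False
    have "cW MJ i v = 0"
    proof (rule ccontr)
      assume "cW MJ i v \<noteq> 0"
      then have h: "r i \<le> v" "0 < MJ i v" "MJ i v \<le> y" by (auto simp: cW_def split: if_splits)
      have "r i \<le> s" using rel h(1) i by blast
      moreover have "MJ i v \<le> MJ i s" by (rule MJ_mono[OF sv])
      moreover have "MJ i s \<le> y" using big i h(3) by force
      ultimately have "A i" using h by (simp add: A_def)
      then show False using False by simp
    qed
    then show ?thesis using False cW_nonneg[of MJ i s] by (simp add: sm_def)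
  qed
  have runeq: "running i l v \<longleftrightarrow> running i l s" for i l unfolding running_def using sigv by simp
  have jobK: "kap i v \<le> kap i s" if i: "i < n" for i
  proof (cases "kap i v = 0")
    case True then show ?thesis using kap_nonneg by simp
  next
    case False
    then obtain l0 where l0: "l0 < k i" "running i l0 v" and yv: "y < MJ i v"
      and sumle: "(\<Sum>l\<in>notrun i v. MR i l v) \<le> y" unfolding kap_def by (auto split: if_splits)
    have ys: "y < MJ i s" using MJ_mono[OF sv, of i] yv by simp
    have nreq: "notrun i v = notrun i s" unfolding notrun_def using runeq by simp
    have "(\<Sum>l\<in>notrun i s. MR i l s) = (\<Sum>l\<in>notrun i s. MR i l v)"
    proof (intro sum.cong refl)
      fix l assume "l \<in> notrun i s"
      then have "\<not> running i l s" by (simp add: notrun_def)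
      then have "cnt i l s = 0" by (rule cnt_zero)
      then show "MR i l s = MR i l v" using MR_const[OF sv constl, of i l] by simp
    qed
    also have "\<dots> \<le> y" using sumle nreq by simp
    finally have "kap i s = y" using ys l0 runeq unfolding kap_def by auto
    then show ?thesis using kap_le by simp
  qed
  have jobS: "cW SR i s - real N * (v - s) * ind i \<le> cW SR i v" if i: "i < n" for i
  proof -
    have "cW SR i s - real N * (v - s) * ind i + arr i s v \<le> cW SR i v"
      unfolding ind_def using sv i rel by (intro cS_step constt) auto
    then show ?thesis using arr_nonneg[OF i, of s v] by simp
  qed
  have rhoM: "rho m v \<le> rho m s - (v - s) + (v - s) * smallm m" if m: "m < N" for m
  proof -
    obtain i l where il: "\<sigma> s m = Some (i, l)" "(np i l \<and> 0 < MP i l s) \<or> MJ i s \<le> y"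
      using busy_machine[OF b sv(1) m] by blast
    have pr: "i < n" "l < k i" "r i \<le> s" "0 < MR i l s" using procd[OF sv(1) m il(1)] by auto
    have mjpos: "0 < MJ i s" using MR_le_MJ[OF pr(1,2) sv(1)] pr(4) by simp
    have svm: "\<sigma> v m = Some (i, l)" using sigv il(1) by simp
    show ?thesis
    proof (cases "MJ i s \<le> y")
      case True
      have "A i" using True pr mjpos by (simp add: A_def)
      then have "\<exists>i<n. A i \<and> (\<exists>l<k i. \<sigma> s m = Some (i, l))" using pr il(1) by blast
      then have sm1: "smallm m = 1" unfolding smallm_def by simp
      have "rho m s = 0" using il(1) True by (simp add: rho_def)
      moreover have "rho m v = 0" using svm True MJ_mono[OF sv, of i] by (simp add: rho_def)
      ultimately show ?thesis using sm1 by simp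
    next
      case False
      have nA: "\<not> A i" using False by (simp add: A_def)
      have sm0: "smallm m = 0"
      proof -
        have "\<not> (\<exists>i'<n. A i' \<and> (\<exists>l'<k i'. \<sigma> s m = Some (i', l')))" using il(1) nA by auto
        then show ?thesis unfolding smallm_def by simp
      qed
      have np: "np i l" using il(2) False by simp
      have yv: "y < MJ i v" using big pr(1) False by simp
      have "rho m s = MR i l s" using il(1) np False by (simp add: rho_def)
      moreover have "rho m v = MR i l v" using svm np yv by (simp add: rho_def)
      moreover have "MR i l v = MR i l s - (v - s) * cnt i l s" by (rule MR_const[OF sv constl])
      moreover have "1 \<le> cnt i l s" by (rule cnt_ge1[OF m il(1)])
      moreover have "(v - s) * 1 \<le> (v - s) * cnt i l s" using sv calculation(4) by (intro mult_left_mono) auto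
      ultimately show ?thesis using sm0 by simp
    qed
  qed
  have count: "(\<Sum>i<n. sm i) = (\<Sum>m<N. smallm m)"
  proof -
    have "(\<Sum>i<n. sm i) = (\<Sum>i<n. \<Sum>l<k i. \<Sum>m<N. if A i \<and> \<sigma> s m = Some (i, l) then 1 else 0::real)"
      unfolding sm_def cnt_def by (intro sum.cong refl) auto
    also have "\<dots> = (\<Sum>i<n. \<Sum>m<N. \<Sum>l<k i. if A i \<and> \<sigma> s m = Some (i, l) then 1 else 0::real)"
      by (intro sum.cong refl sum.swap)
    also have "\<dots> = (\<Sum>m<N. \<Sum>i<n. \<Sum>l<k i. if A i \<and> \<sigma> s m = Some (i, l) then 1 else 0::real)"
      by (rule sum.swap)
    also have "\<dots> = (\<Sum>m<N. smallm m)"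
    proof (intro sum.cong refl)
      fix m
      have "(\<Sum>i<n. \<Sum>l<k i. if A i \<and> \<sigma> s m = Some (i, l) then 1 else 0::real)
          = (\<Sum>i<n. if A i \<and> (\<exists>l\<in>{..<k i}. \<sigma> s m = Some (i, l)) then 1 else 0::real)"
      proof (intro sum.cong refl)
        fix i
        show "(\<Sum>l<k i. if A i \<and> \<sigma> s m = Some (i, l) then 1 else 0::real) =
              (if A i \<and> (\<exists>l\<in>{..<k i}. \<sigma> s m = Some (i, l)) then 1 else 0)"
          by (subst sum_ind_unique) auto
      qed
      also have "\<dots> = smallm m" unfolding smallm_def
        by (subst sum_ind_unique) auto
      finally show "(\<Sum>i<n. \<Sum>l<k i. if A i \<and> \<sigma> s m = Some (i, l) then 1 else 0::real) = smallm m" .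
    qed
    finally show ?thesis .
  qed
  have S1: "(\<Sum>i<n. cW MJ i v + kap i v - cW SR i v) \<le>
      (\<Sum>i<n. (cW MJ i s + kap i s - cW SR i s) - (v - s) * sm i + real N * (v - s) * ind i)"
  proof (intro sum_mono)
    fix i assume "i \<in> {..<n}"
    then have i: "i < n" by simp
    show "cW MJ i v + kap i v - cW SR i v \<le> (cW MJ i s + kap i s - cW SR i s) - (v - s) * sm i + real N * (v - s) * ind i"
      using jobM[OF i] jobK[OF i] jobS[OF i] by simp
  qed
  also have "\<dots> = (\<Sum>i<n. cW MJ i s + kap i s - cW SR i s) - (v - s) * (\<Sum>i<n. sm i) + real N * (v - s) * (\<Sum>i<n. ind i)"
    by (simp add: sum.distrib sum_subtractf sum_distrib_left)
  finally have S1': "(\<Sum>i<n. cW MJ i v + kap i v - cW SR i v) \<le>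
     (\<Sum>i<n. cW MJ i s + kap i s - cW SR i s) - (v - s) * (\<Sum>i<n. sm i) + real N * (v - s) * (\<Sum>i<n. ind i)" .
  have "(\<Sum>i<n. ind i) \<le> 1" unfolding ind_def by (rule tau_sum)
  then have I: "real N * (v - s) * (\<Sum>i<n. ind i) \<le> real N * (v - s) * 1" using sv by (intro mult_left_mono) auto
  have S2: "(\<Sum>m<N. rho m v) \<le> (\<Sum>m<N. rho m s - (v - s) + (v - s) * smallm m)"
    by (intro sum_mono rhoM) auto
  also have "\<dots> = (\<Sum>m<N. rho m s) - real N * (v - s) + (v - s) * (\<Sum>m<N. smallm m)"
    by (simp add: sum.distrib sum_subtractf sum_distrib_left)
  finally have S2': "(\<Sum>m<N. rho m v) \<le> (\<Sum>m<N. rho m s) - real N * (v - s) + (v - s) * (\<Sum>m<N. smallm m)" .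
  show ?thesis unfolding Psi_def using S1' S2' I count by simp
qed

end



context sched begin

lemma busy_persist:
  assumes sv: "0 \<le> s" "s \<le> v" and sig: "\<sigma> v = \<sigma> s"
    and rel: "\<forall>i<n. r i \<le> v \<longrightarrow> r i \<le> s" and big: "\<forall>i<n. y < MJ i s \<longrightarrow> y < MJ i v"
    and b: "busy v"
  shows "busy s"
proof -
  obtain j l where j: "j < n" "l < k j" "r j \<le> v" "0 < MR j l v" "\<not> running j l v"
    "\<not> np j l \<or> MP j l v = 0" "MJ j v \<le> y" using b unfolding busy_def by blast
  have "r j \<le> s" using rel j(1,3) by blast
  moreover have "0 < MR j l s" using MR_mono[OF sv, of j l] j(4) by simp
  moreover have "\<not> running j l s" using j(5) sig unfolding running_def by simp
  moreover have "\<not> np j l \<or> MP j l s = 0" using j(6) MP_mono(1)[OF sv, of j l] MP_nonneg[of j l s] by auto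
  moreover have "MJ j s \<le> y" using big j(1,7) by force
  ultimately show ?thesis unfolding busy_def using j(1,2) by blast
qed

lemma main:
  assumes t: "0 \<le> t"
  shows "Psi t \<le> real N * y + real N * eta n k p np"
proof (rule real_ind0[where P="\<lambda>t. Psi t \<le> real N * y + real N * eta n k p np", OF _ _ t])
  have B0: "0 \<le> real N * y + real N * eta n k p np" using y0 eta_nonneg by simp
  fix s :: real assume s: "0 \<le> s" and IH: "\<And>u. 0 \<le> u \<Longrightarrow> u < s \<Longrightarrow> Psi u \<le> real N * y + real N * eta n k p np"
  show "Psi s \<le> real N * y + real N * eta n k p np"
  proof (cases "busy s")
    case False then show ?thesis by (rule nonbusy_bound[OF s])
  next
    case b: True
    show ?thesis
    proof (cases "s = 0")
      case True then show ?thesis using Psi_0 b B0 by simp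
    next
      case False
      then have s0: "0 < s" using s by simp
      obtain e1 where e1: "e1 > 0" "\<And>v. s - e1 < v \<Longrightarrow> v < s \<Longrightarrow> \<sigma> v = \<sigma> (s - e1 / 2)"
        using pconst_left[OF pc_sigma, of s] by blast
      obtain e2 where e2: "e2 > 0" "\<And>v. s - e2 < v \<Longrightarrow> v < s \<Longrightarrow> \<tau> v = \<tau> (s - e2 / 2)"
        using pconst_left[OF pc_tau, of s] by blast
      define X where "X = {0, s - min e1 e2} \<union> {r i |i. i < n \<and> r i < s}"
      have finX: "finite X" unfolding X_def by auto
      define a0 where "a0 = Max X"
      have a0s: "a0 < s"
      proof -
        have "\<forall>x\<in>X. x < s" unfolding X_def using s0 e1(1) e2(1) by auto
        then show ?thesis unfolding a0_def using finX by (subst Max_less_iff) (auto simp: X_def)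
      qed
      have a0ge: "x \<le> a0" if "x \<in> X" for x unfolding a0_def using finX that by (rule Max_ge)
      show ?thesis
      proof (rule lim_left[OF a0s])
        show "0 \<le> real N" by simp
        fix u assume u: "a0 < u" "u < s"
        have u0: "0 \<le> u" using a0ge[of 0] u by (auto simp: X_def)
        have ue: "s - min e1 e2 < u" using a0ge[of "s - min e1 e2"] u by (auto simp: X_def)
        have su: "\<sigma> u = \<sigma> (s - e1 / 2)" using ue u by (intro e1(2)) auto
        have tu: "\<tau> u = \<tau> (s - e2 / 2)" using ue u by (intro e2(2)) auto
        have cs: "\<sigma> w = \<sigma> u" if "u \<le> w" "w < s" for w
        proof -
          have "\<sigma> w = \<sigma> (s - e1 / 2)" using that ue by (intro e1(2)) auto
          then show ?thesis using su by simp
        qed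
        have ct: "\<tau> w = \<tau> u" if "u \<le> w" "w < s" for w
        proof -
          have "\<tau> w = \<tau> (s - e2 / 2)" using that ue by (intro e2(2)) auto
          then show ?thesis using tu by simp
        qed
        have rel: "\<forall>i<n. r i \<le> s \<longrightarrow> r i \<le> u \<or> r i = s"
        proof (intro allI impI)
          fix i assume i: "i < n" "r i \<le> s"
          show "r i \<le> u \<or> r i = s"
          proof (cases "r i < s")
            case True
            then have "r i \<in> X" unfolding X_def using i by blast
            then show ?thesis using a0ge u by force
          next
            case False then show ?thesis using i by simp
          qed
        qed
        have "Psi s \<le> Psi u + real N * (s - u)" by (rule Psi_left[OF u0 u(2) cs ct rel b])
        then show "Psi s \<le> real N * y + real N * eta n k p np + real N * (s - u)" using IH[OF u0 u(2)] by simp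
      qed
    qed
  qed
next
  fix s :: real assume s: "0 \<le> s" and IH: "\<And>u. 0 \<le> u \<Longrightarrow> u \<le> s \<Longrightarrow> Psi u \<le> real N * y + real N * eta n k p np"
  obtain e1 where e1: "e1 > 0" "\<And>v. s \<le> v \<Longrightarrow> v < s + e1 \<Longrightarrow> \<sigma> v = \<sigma> s"
    using pconst_right[OF pc_sigma, of s] by blast
  obtain e2 where e2: "e2 > 0" "\<And>v. s \<le> v \<Longrightarrow> v < s + e2 \<Longrightarrow> \<tau> v = \<tau> s"
    using pconst_right[OF pc_tau, of s] by blast
  have ev1: "eventually (\<lambda>v. v \<in> {s<..<s + min e1 e2}) (at_right s)"
    using e1(1) e2(1) by (intro eventually_at_right_real) simp
  have ev2: "eventually (\<lambda>v. \<forall>i\<in>{..<n}. s < r i \<longrightarrow> v < r i) (at_right s)"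
  proof (rule eventually_ball_finite)
    show "finite {..<n}" by simp
    show "\<forall>i\<in>{..<n}. eventually (\<lambda>v. s < r i \<longrightarrow> v < r i) (at_right s)"
    proof
      fix i
      show "eventually (\<lambda>v. s < r i \<longrightarrow> v < r i) (at_right s)"
      proof (cases "s < r i")
        case True
        have "eventually (\<lambda>v. v \<in> {s<..<r i}) (at_right s)" using True by (rule eventually_at_right_real)
        then show ?thesis by (rule eventually_mono) auto
      next
        case False then show ?thesis by simp
      qed
    qed
  qed
  have ev3: "eventually (\<lambda>v. \<forall>i\<in>{..<n}. y < MJ i s \<longrightarrow> y < MJ i v) (at_right s)"
  proof (rule eventually_ball_finite)
    show "finite {..<n}" by simp
    show "\<forall>i\<in>{..<n}. eventually (\<lambda>v. y < MJ i s \<longrightarrow> y < MJ i v) (at_right s)"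
    proof
      fix i
      show "eventually (\<lambda>v. y < MJ i s \<longrightarrow> y < MJ i v) (at_right s)"
      proof (cases "y < MJ i s")
        case True
        have lim: "((\<lambda>v. MJ i s - real (k i) * real N * (v - s)) \<longlongrightarrow> MJ i s - real (k i) * real N * (s - s)) (at_right s)"
          by (intro tendsto_intros)
        then have lim': "((\<lambda>v. MJ i s - real (k i) * real N * (v - s)) \<longlongrightarrow> MJ i s) (at_right s)" by simp
        have "eventually (\<lambda>v. y < MJ i s - real (k i) * real N * (v - s)) (at_right s)"
          using order_tendstoD(1)[OF lim' True] .
        moreover have "eventually (\<lambda>v. s < v) (at_right s)" by (rule eventually_at_right_less)
        ultimately show ?thesis
        proof (rule eventually_elim2)
          fix v assume "y < MJ i s - real (k i) * real N * (v - s)" "s < v"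
          then show "y < MJ i s \<longrightarrow> y < MJ i v" using MJ_lower[OF s, of v i] by simp
        qed
      next
        case False then show ?thesis by simp
      qed
    qed
  qed
  show "eventually (\<lambda>t. Psi t \<le> real N * y + real N * eta n k p np) (at_right s)"
    using ev1 ev2 ev3
  proof (eventually_elim)
    case (elim v)
    have v: "s < v" "v < s + min e1 e2" using elim(1) by auto
    have v0: "0 \<le> v" using v s by simp
    show ?case
    proof (cases "busy v")
      case False then show ?thesis by (rule nonbusy_bound[OF v0])
    next
      case True
      have cs: "\<sigma> w = \<sigma> s" if "s \<le> w" "w \<le> v" for w using that v by (intro e1(2)) auto
      have ct: "\<tau> w = \<tau> s" if "s \<le> w" "w < v" for w using that v by (intro e2(2)) auto
      have rel: "\<forall>i<n. r i \<le> v \<longrightarrow> r i \<le> s" using elim(2) v by force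
      have big: "\<forall>i<n. y < MJ i s \<longrightarrow> y < MJ i v" using elim(3) by blast
      have sv: "s \<le> v" using v by simp
      have "\<sigma> v = \<sigma> s" using cs[of v] sv by simp
      then have bs: "busy s" using busy_persist[OF s sv _ rel big True] by simp
      have "Psi v \<le> Psi s" using Psi_right[OF s sv cs ct rel big bs] by simp
      then show ?thesis using IH[OF s] by simp
    qed
  qed
qed

lemma final:
  assumes t: "0 \<le> t"
  shows "Wle n r (mjrem N k p \<sigma>) y t - Wle n r (srem N k p \<tau>) y t \<le> real N * (2 * y + eta n k p np)"
proof -
  have "Wle n r (mjrem N k p \<sigma>) y t - Wle n r (srem N k p \<tau>) y t = (\<Sum>i<n. cW MJ i t - cW SR i t)"
    by (simp add: Wle_sum sum_subtractf)
  also have "\<dots> \<le> (\<Sum>i<n. cW MJ i t + kap i t - cW SR i t)"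
    by (intro sum_mono) (use kap_nonneg in auto)
  also have "\<dots> \<le> Psi t"
  proof -
    have "0 \<le> (\<Sum>m<N. rho m t)" by (intro sum_nonneg rho_nonneg[OF t]) auto
    then show ?thesis unfolding Psi_def by simp
  qed
  also have "\<dots> \<le> real N * y + real N * eta n k p np" by (rule main[OF t])
  also have "\<dots> \<le> real N * (2 * y + eta n k p np)" using y0 by (simp add: algebra_simps)
  finally show ?thesis .
qed

end

theorem lemma2:
  fixes N n :: nat and r :: "nat \<Rightarrow> real" and k :: "nat \<Rightarrow> nat"
    and p :: "nat \<Rightarrow> nat \<Rightarrow> real" and np :: "nat \<Rightarrow> nat \<Rightarrow> bool"
    and \<sigma> :: "real \<Rightarrow> nat \<Rightarrow> (nat \<times> nat) option" and \<tau> :: "real \<Rightarrow> nat option"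
    and y t :: real
  assumes "N \<ge> 1"
    and "\<forall>i<n. r i \<ge> 0 \<and> k i \<ge> 1"
    and "\<forall>i<n. \<forall>l<k i. p i l > 0"
    and "msrpt_schedule N n r k p np \<sigma>"
    and "srpt1N_schedule N n r k p \<tau>"
    and "y \<ge> 0" and "t \<ge> 0"
  shows "Wle n r (mjrem N k p \<sigma>) y t - Wle n r (srem N k p \<tau>) y t
           \<le> real N * (2 * y + eta n k p np)"
proof -
  have "sched N n r k p np \<sigma> \<tau> y" unfolding sched_def using assms by auto
  then show ?thesis using assms(7) by (rule sched.final)
qed


end
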